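(* Let $q=2^h$. In ${\rm PG}(4,q)$ with homogeneous coordinates $(X_1,\dots,X_5)$ let $\ell$ be the line $X_1=X_4=X_5=0$, $\Sigma$ the solid $X_1=0$, and $\mathcal H$ the hyperbolic quadric of $\Sigma$ with equation $X_2X_5+X_3X_4=0$. Let $\mathcal W(3,q)$ be the symplectic polar space of $\Sigma$ whose lines are the lines of $\Sigma$ that are totally isotropic for the alternating form $B(x,y)=x_2y_5+x_5y_2+x_3y_4+x_4y_3$ (these are the lines contained in $\mathcal H$ together with the lines of $\Sigma$ tangent to $\mathcal H$). Let $\mathcal T$ be the set of lines of $\mathcal W(3,q)$ having exactly one point in common with $\mathcal H\setminus\ell$. For $b\in{\rm GF}(q)$ let $$M_{1,b,1,0}=\begin{pmatrix}1&0&0&0&0\\0&1&0&b&0\\0&0&1&0&b\\0&0&0&1&0\\0&0&0&0&1\end{pmatrix},$$ and let $G_2=\{M_{1,b,1,0}: b\in{\rm GF}(q)\}$, acting on points (column vectors) by left multiplication. Then for every line $t\in\mathcal T$, the set $t^{G_2}\cup\{\ell\}$ is a regulus of $\Sigma$. *)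

theory Defs
  imports "HOL-Analysis.Finite_Cartesian_Product"
begin

text \<open>Vectors of GF(q)^5 (coordinates X1..X5 are the components 1,2,3,4,5 of type 5).
  Projective subspaces of PG(4,q) are represented by the corresponding linear subspaces
  of GF(q)^5 (sets of vectors); a projective point is a 1-dimensional subspace,
  a projective line is a 2-dimensional subspace.\<close>

definition vsmult :: "'a::field \<Rightarrow> 'a^5 \<Rightarrow> 'a^5" where
  "vsmult c x = (\<chi> i. c * x $ i)"

definition ppoint :: "('a::field)^5 \<Rightarrow> ('a^5) set" where
  "ppoint x = {vsmult c x | c. True}"

definition span2 :: "('a::field)^5 \<Rightarrow> 'a^5 \<Rightarrow> ('a^5) set" where
  "span2 x y = {vsmult a x + vsmult b y | a b. True}"

definition is_pline :: "('a::field ^5) set \<Rightarrow> bool" where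
  "is_pline L \<longleftrightarrow> (\<exists>x y. L = span2 x y \<and>
      (\<forall>a b. vsmult a x + vsmult b y = 0 \<longrightarrow> a = 0 \<and> b = 0))"

definition meets :: "('a::field ^5) set \<Rightarrow> ('a^5) set \<Rightarrow> bool" where
  "meets L M \<longleftrightarrow> (\<exists>x. x \<noteq> 0 \<and> x \<in> L \<and> x \<in> M)"

definition Sigma_solid :: "('a::field ^5) set" where
  "Sigma_solid = {x. x $ 1 = 0}"

definition ell :: "('a::field ^5) set" where
  "ell = {x. x $ 1 = 0 \<and> x $ 4 = 0 \<and> x $ 5 = 0}"

definition solid_line :: "('a::field ^5) set \<Rightarrow> bool" where
  "solid_line L \<longleftrightarrow> is_pline L \<and> L \<subseteq> Sigma_solid"

definition Hq :: "('a::field ^5) set" where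
  "Hq = {x. x \<in> Sigma_solid \<and> x \<noteq> 0 \<and> x $ 2 * x $ 5 + x $ 3 * x $ 4 = 0}"

definition Bform :: "('a::field)^5 \<Rightarrow> 'a^5 \<Rightarrow> 'a" where
  "Bform x y = x $ 2 * y $ 5 + x $ 5 * y $ 2 + x $ 3 * y $ 4 + x $ 4 * y $ 3"

definition W_line :: "('a::field ^5) set \<Rightarrow> bool" where
  "W_line L \<longleftrightarrow> solid_line L \<and> (\<forall>x\<in>L. \<forall>y\<in>L. Bform x y = 0)"

definition T_lines :: "(('a::field ^5) set) set" where
  "T_lines = {t. W_line t \<and>
      card {ppoint x | x. x \<in> t \<and> x \<in> Hq \<and> x \<notin> ell} = 1}"

definition Mb :: "'a::field \<Rightarrow> 'a^5^5" where
  "Mb b = (\<chi> i j. if i = j then 1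
                 else if (i = 2 \<and> j = 4) \<or> (i = 3 \<and> j = 5) then b else 0)"

definition G2_orbit :: "('a::field ^5) set \<Rightarrow> (('a^5) set) set" where
  "G2_orbit t = {(\<lambda>x. Mb b *v x) ` t | b. True}"

definition transversals :: "('a::field ^5) set \<Rightarrow> ('a^5) set \<Rightarrow> ('a^5) set \<Rightarrow> (('a^5) set) set" where
  "transversals l1 l2 l3 = {m. solid_line m \<and> meets m l1 \<and> meets m l2 \<and> meets m l3}"

definition is_regulus :: "(('a::field ^5) set) set \<Rightarrow> bool" where
  "is_regulus R \<longleftrightarrow> (\<exists>l1 l2 l3. solid_line l1 \<and> solid_line l2 \<and> solid_line l3 \<and>
      \<not> meets l1 l2 \<and> \<not> meets l1 l3 \<and> \<not> meets l2 l3 \<and>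
      R = {L. solid_line L \<and> (\<forall>m \<in> transversals l1 l2 l3. meets L m)})"

end

theory Submission
  imports Defs
begin
lemma exhaust_5:
  fixes x :: 5
  shows "x = 1 \<or> x = 2 \<or> x = 3 \<or> x = 4 \<or> x = 5"
proof (induct x)
  case (of_int z)
  then have "z = 0 \<or> z = 1 \<or> z = 2 \<or> z = 3 \<or> z = 4" by fastforce
  then show ?case by auto
qed
lemma UNIV_5: "UNIV = {1, 2, 3, 4, 5::5}"
  using exhaust_5 by auto
lemma vec5_eq: "(x::'a^5) = y \<longleftrightarrow> x$1=y$1 \<and> x$2=y$2 \<and> x$3=y$3 \<and> x$4=y$4 \<and> x$5=y$5"
proof
  assume h: "x$1=y$1 \<and> x$2=y$2 \<and> x$3=y$3 \<and> x$4=y$4 \<and> x$5=y$5"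
  show "x = y" unfolding vec_eq_iff
  proof
    fix i :: 5
    from exhaust_5[of i] h show "x$i = y$i" by (elim disjE) auto
  qed
qed simp
definition lam :: "('a::field)^5 \<Rightarrow> 'a^5" where
  "lam z = (\<chi> i. if i = 2 then z$4 else if i = 3 then z$5 else 0)"
lemma lam_comp[simp]: "lam z $ 1 = 0" "lam z $ 2 = z $ 4" "lam z $ 3 = z $ 5" "lam z $ 4 = 0" "lam z $ 5 = 0"
  by (simp_all add: lam_def)
lemma vsmult_comp[simp]: "vsmult c x $ i = c * x $ i"
  by (simp add: vsmult_def)
lemma distinct5: "(1::5) \<noteq> 2" "(1::5) \<noteq> 3" "(1::5) \<noteq> 4" "(1::5) \<noteq> 5"
 "(2::5) \<noteq> 3" "(2::5) \<noteq> 4" "(2::5) \<noteq> 5" "(3::5) \<noteq> 4" "(3::5) \<noteq> 5" "(4::5) \<noteq> 5"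
  by simp_all
lemma sum5: "sum (f::5\<Rightarrow>'a::comm_monoid_add) UNIV = f 1 + f 2 + f 3 + f 4 + f 5"
  unfolding UNIV_5 using distinct5 by (simp add: add.assoc)
lemma Mb_c[simp]: "(Mb s *v z) $ 1 = z $ 1" "(Mb s *v z) $ 2 = z $ 2 + s * z $ 4"
  "(Mb s *v z) $ 3 = z $ 3 + s * z $ 5" "(Mb s *v z) $ 4 = z $ 4" "(Mb s *v z) $ 5 = z $ 5"
  unfolding matrix_vector_mult_def sum5 Mb_def using distinct5 by (simp_all add: add.commute)

definition indep :: "('a::field)^5 \<Rightarrow> 'a^5 \<Rightarrow> bool" where
  "indep x y \<longleftrightarrow> (\<forall>a b. vsmult a x + vsmult b y = 0 \<longrightarrow> a = 0 \<and> b = 0)"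

lemma span2_mem: "vsmult a x + vsmult b y \<in> span2 x y"
  unfolding span2_def by blast

lemma scal_id:
  fixes a b c d e f X Y :: "'a::field"
  assumes D: "a*d - b*c \<noteq> 0"
  shows "((e*d - f*c)/(a*d-b*c))*(a*X + b*Y) + ((f*a - e*b)/(a*d-b*c))*(c*X + d*Y) = e*X + f*Y"
proof -
  have n: "(e*d - f*c)*(a*X + b*Y) + (f*a - e*b)*(c*X + d*Y) = (a*d-b*c)*(e*X+f*Y)"
    by (simp add: algebra_simps)
  have "((e*d - f*c)/(a*d-b*c))*(a*X + b*Y) + ((f*a - e*b)/(a*d-b*c))*(c*X + d*Y)
      = ((e*d - f*c)*(a*X + b*Y) + (f*a - e*b)*(c*X + d*Y)) / (a*d-b*c)"
    by (simp add: add_divide_distrib)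
  also have "\<dots> = e*X + f*Y" unfolding n using D by simp
  finally show ?thesis .
qed

lemma line_eq:
  fixes x y P Q :: "('a::field)^5"
  assumes L: "L = span2 x y" and ixy: "indep x y" and P: "P \<in> L" and Q: "Q \<in> L"
    and iPQ: "indep P Q"
  shows "L = span2 P Q"
proof -
  obtain a b where Pd: "P = vsmult a x + vsmult b y" using P L unfolding span2_def by auto
  obtain c d where Qd: "Q = vsmult c x + vsmult d y" using Q L unfolding span2_def by auto
  have D: "a*d - b*c \<noteq> 0"
  proof
    assume D0: "a*d - b*c = 0"
    have e1: "vsmult d P + vsmult (-b) Q = vsmult (a*d - b*c) x"
      unfolding Pd Qd vec5_eq by (simp add: algebra_simps)
    have e2: "vsmult (-c) P + vsmult a Q = vsmult (a*d - b*c) y"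
      unfolding Pd Qd vec5_eq by (simp add: algebra_simps)
    have z0: "vsmult 0 x = 0" "vsmult 0 y = 0" unfolding vec5_eq by simp_all
    have "d = 0 \<and> -b = 0" using iPQ[unfolded indep_def, rule_format, of d "-b"] e1 D0 z0 by simp
    moreover have "-c = 0 \<and> a = 0" using iPQ[unfolded indep_def, rule_format, of "-c" a] e2 D0 z0 by simp
    ultimately have "P = 0" unfolding Pd vec5_eq by simp
    then have "vsmult 1 P + vsmult 0 Q = 0" unfolding vec5_eq by simp
    from iPQ[unfolded indep_def, rule_format, OF this] show False by simp
  qed
  show ?thesis
  proof (rule set_eqI)
    fix z
    show "z \<in> L \<longleftrightarrow> z \<in> span2 P Q"
    proof
      assume "z \<in> L"
      then obtain e f where zd: "z = vsmult e x + vsmult f y" using L unfolding span2_def by auto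
      have zz: "z = vsmult ((e*d - f*c)/(a*d-b*c)) P + vsmult ((f*a - e*b)/(a*d-b*c)) Q"
        unfolding zd Pd Qd vec5_eq by (simp only: vector_add_component vsmult_comp scal_id[OF D])
      show "z \<in> span2 P Q" unfolding zz by (rule span2_mem)
    next
      assume "z \<in> span2 P Q"
      then obtain g k where zd: "z = vsmult g P + vsmult k Q" unfolding span2_def by auto
      have zz: "z = vsmult (g*a + k*c) x + vsmult (g*b+k*d) y"
        unfolding zd Pd Qd vec5_eq by (simp add: algebra_simps)
      show "z \<in> L" unfolding L zz by (rule span2_mem)
    qed
  qed
qed

lemma span2_memI: "z = vsmult a u + vsmult b v \<Longrightarrow> z \<in> span2 u v"
  using span2_mem by metis

lemma meets_sym: "meets A B \<longleftrightarrow> meets B A"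
  unfolding meets_def by blast

lemma Mb_lin: "Mb s *v (vsmult a x + vsmult b y) = vsmult a (Mb s *v x) + vsmult b (Mb s *v y)"
  unfolding vec5_eq by (simp add: algebra_simps)

lemma Mb_img: "(\<lambda>z. Mb s *v z) ` span2 x y = span2 (Mb s *v x) (Mb s *v y)"
proof (rule set_eqI)
  fix w
  show "w \<in> (\<lambda>z. Mb s *v z) ` span2 x y \<longleftrightarrow> w \<in> span2 (Mb s *v x) (Mb s *v y)"
  proof
    assume "w \<in> (\<lambda>z. Mb s *v z) ` span2 x y"
    then obtain a b where "w = Mb s *v (vsmult a x + vsmult b y)" unfolding span2_def by auto
    then show "w \<in> span2 (Mb s *v x) (Mb s *v y)" unfolding Mb_lin by (rule span2_memI)
  next
    assume "w \<in> span2 (Mb s *v x) (Mb s *v y)"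
    then obtain a b where "w = vsmult a (Mb s *v x) + vsmult b (Mb s *v y)" unfolding span2_def by auto
    then have "w = Mb s *v (vsmult a x + vsmult b y)" unfolding Mb_lin .
    then show "w \<in> (\<lambda>z. Mb s *v z) ` span2 x y" using span2_mem by blast
  qed
qed

definition E2 :: "('a::field)^5" where "E2 = (\<chi> i. if i = 2 then 1 else 0)"
definition E3 :: "('a::field)^5" where "E3 = (\<chi> i. if i = 3 then 1 else 0)"
lemma E_comp[simp]: "E2 $ 1 = 0" "E2 $ 2 = 1" "E2 $ 3 = 0" "E2 $ 4 = 0" "E2 $ 5 = 0"
  "E3 $ 1 = 0" "E3 $ 2 = 0" "E3 $ 3 = 1" "E3 $ 4 = 0" "E3 $ 5 = 0"
  unfolding E2_def E3_def using distinct5 by (simp_all add: eq_commute)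

lemma ell_span: "ell = span2 E2 E3"
proof (rule set_eqI)
  fix z :: "'a^5"
  show "z \<in> ell \<longleftrightarrow> z \<in> span2 E2 E3"
  proof
    assume "z \<in> ell"
    then have "z = vsmult (z$2) E2 + vsmult (z$3) E3" unfolding ell_def vec5_eq by simp
    then show "z \<in> span2 E2 E3" by (rule span2_memI)
  next
    assume "z \<in> span2 E2 E3"
    then show "z \<in> ell" unfolding span2_def ell_def by auto
  qed
qed

lemma indep_E: "indep (E2::'a::field^5) E3"
  unfolding indep_def
proof (intro allI impI)
  fix a b :: 'a
  assume h: "vsmult a E2 + vsmult b E3 = 0"
  then have "(vsmult a E2 + vsmult b E3) $ 2 = 0" "(vsmult a E2 + vsmult b E3) $ 3 = 0" by simp_all
  then show "a = 0 \<and> b = 0" by simp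
qed

lemma ell_solid: "solid_line (ell::('a::field^5) set)"
  unfolding solid_line_def is_pline_def
  using ell_span indep_E unfolding indep_def ell_def Sigma_solid_def by blast

definition Ffun :: "('a::field)^5 \<Rightarrow> 'a^5 \<Rightarrow> 'a \<Rightarrow> 'a \<Rightarrow> 'a \<Rightarrow> 'a \<Rightarrow> 'a^5" where
  "Ffun x y c1 c2 c3 c4 = vsmult c1 (lam x) + vsmult c2 (lam y) + vsmult c3 x + vsmult c4 y"

context
  fixes x y :: "'a::field ^5"
  assumes x1: "x $ 1 = 0" and y1: "y $ 1 = 0"
    and i2: "\<And>c d. c * x$4 + d * y$4 = 0 \<Longrightarrow> c * x$5 + d * y$5 = 0 \<Longrightarrow> c = 0 \<and> d = 0"
begin

lemma i2': "c * x$4 + d * y$4 = e * x$4 + f*y$4 \<Longrightarrow> c*x$5 + d*y$5 = e*x$5 + f*y$5 \<Longrightarrow> c = e \<and> d = f"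
  using i2[of "c-e" "d-f"] by (simp add: algebra_simps)

lemma indep_xy: "indep x y"
  unfolding indep_def
proof (intro allI impI)
  fix a b :: 'a
  assume h: "vsmult a x + vsmult b y = 0"
  then have "(vsmult a x + vsmult b y) $ 4 = 0" "(vsmult a x + vsmult b y) $ 5 = 0" by simp_all
  then show "a = 0 \<and> b = 0" using i2[of a b] by simp
qed

lemma t_nz: assumes "z \<in> span2 x y" "z \<noteq> 0" shows "z$4 \<noteq> 0 \<or> z$5 \<noteq> 0"
proof (rule ccontr)
  assume h: "\<not> (z$4 \<noteq> 0 \<or> z$5 \<noteq> 0)"
  obtain a b where zd: "z = vsmult a x + vsmult b y" using assms(1) unfolding span2_def by auto
  have "a = 0 \<and> b = 0" using h i2[of a b] unfolding zd by simp
  then have "z = 0" unfolding zd vec5_eq by simp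
  with assms(2) show False by simp
qed

lemma t_1: "z \<in> span2 x y \<Longrightarrow> z $ 1 = 0"
  unfolding span2_def using x1 y1 by auto

definition Mt :: "'a \<Rightarrow> ('a^5) set" where
  "Mt s = (\<lambda>z. Mb s *v z) ` span2 x y"

lemma Mt_eq: "Mt s = span2 (Mb s *v x) (Mb s *v y)"
  unfolding Mt_def by (rule Mb_img)

lemma Mb0: "Mb 0 *v z = z"
  unfolding vec5_eq by simp

lemma Mt0: "Mt 0 = span2 x y"
  unfolding Mt_def Mb0 by simp

lemma indep_Mt: "indep (Mb s *v x) (Mb s *v y)"
  unfolding indep_def
proof (intro allI impI)
  fix a b :: 'a
  assume h: "vsmult a (Mb s *v x) + vsmult b (Mb s *v y) = 0"
  then have "(vsmult a (Mb s *v x) + vsmult b (Mb s *v y)) $ 4 = 0"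
    "(vsmult a (Mb s *v x) + vsmult b (Mb s *v y)) $ 5 = 0" by simp_all
  then show "a = 0 \<and> b = 0" using i2[of a b] by simp
qed

lemma solid_Mt: "solid_line (Mt s)"
  unfolding solid_line_def is_pline_def
proof
  show "\<exists>u v. Mt s = span2 u v \<and> (\<forall>a b. vsmult a u + vsmult b v = 0 \<longrightarrow> a = 0 \<and> b = 0)"
    using Mt_eq indep_Mt unfolding indep_def by blast
  show "Mt s \<subseteq> Sigma_solid"
    unfolding Mt_def Sigma_solid_def using t_1 by auto
qed

lemma skew_ell: "\<not> meets ell (Mt s)"
proof
  assume "meets ell (Mt s)"
  then obtain w where w: "w \<noteq> 0" "w \<in> ell" "w \<in> Mt s" unfolding meets_def by auto
  then obtain z where z: "z \<in> span2 x y" "w = Mb s *v z" unfolding Mt_def by auto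
  have "z$4 = 0" "z$5 = 0" using w(2) z(2) unfolding ell_def by auto
  then have "z = 0" using t_nz z(1) by blast
  then have "w = 0" using z(2) unfolding vec5_eq by simp
  with w(1) show False by simp
qed

lemma skew_Mt: assumes "s \<noteq> s'" shows "\<not> meets (Mt s) (Mt s')"
proof
  assume "meets (Mt s) (Mt s')"
  then obtain w where w: "w \<noteq> 0" "w \<in> Mt s" "w \<in> Mt s'" unfolding meets_def by auto
  then obtain z where z: "z \<in> span2 x y" "w = Mb s *v z" unfolding Mt_def by auto
  obtain z' where z': "z' \<in> span2 x y" "w = Mb s' *v z'" using w(3) unfolding Mt_def by auto
  obtain a b where zd: "z = vsmult a x + vsmult b y" using z(1) unfolding span2_def by auto
  obtain c d where zd': "z' = vsmult c x + vsmult d y" using z'(1) unfolding span2_def by auto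
  have "w$4 = z$4" "w$5 = z$5" unfolding z(2) by simp_all
  moreover have "w$4 = z'$4" "w$5 = z'$5" unfolding z'(2) by simp_all
  ultimately have "a = c \<and> b = d" using i2'[of a b c d] unfolding zd zd' by simp
  then have zz: "z = z'" unfolding zd zd' by simp
  have "w$2 = z$2 + s * z$4" "w$3 = z$3 + s * z$5" unfolding z(2) by simp_all
  moreover have "w$2 = z$2 + s' * z$4" "w$3 = z$3 + s' * z$5" unfolding z'(2) zz[symmetric] by simp_all
  ultimately have "(s - s') * z$4 = 0" "(s - s') * z$5 = 0" by (auto simp: algebra_simps)
  then have "z$4 = 0" "z$5 = 0" using assms by simp_all
  then have "z = 0" using t_nz z(1) by blast
  then have "w = 0" using z(2) unfolding vec5_eq by simp
  with w(1) show False by simp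
qed

lemma Ffun_inj:
  assumes "Ffun x y c1 c2 c3 c4 = Ffun x y d1 d2 d3 d4"
  shows "c1 = d1 \<and> c2 = d2 \<and> c3 = d3 \<and> c4 = d4"
proof -
  have h: "Ffun x y c1 c2 c3 c4 $ i = Ffun x y d1 d2 d3 d4 $ i" for i using assms by simp
  have "c3 * x$4 + c4 * y$4 = d3 * x$4 + d4 * y$4" "c3 * x$5 + c4 * y$5 = d3 * x$5 + d4 * y$5"
    using h[of 4] h[of 5] unfolding Ffun_def by simp_all
  then have A: "c3 = d3 \<and> c4 = d4" using i2' by blast
  have "c1 * x$4 + c2 * y$4 + c3 * x$2 + c4 * y$2 = d1 * x$4 + d2 * y$4 + d3 * x$2 + d4 * y$2"
       "c1 * x$5 + c2 * y$5 + c3 * x$3 + c4 * y$3 = d1 * x$5 + d2 * y$5 + d3 * x$3 + d4 * y$3"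
    using h[of 2] h[of 3] unfolding Ffun_def by simp_all
  then have "c1 * x$4 + c2 * y$4 = d1 * x$4 + d2 * y$4" "c1 * x$5 + c2 * y$5 = d1 * x$5 + d2 * y$5"
    using A by simp_all
  then have "c1 = d1 \<and> c2 = d2" using i2' by blast
  with A show ?thesis by simp
qed

lemma Ffun_zero: "Ffun x y 0 0 0 0 = 0"
  unfolding Ffun_def vec5_eq by simp

lemma trans_mem:
  assumes z: "z \<in> span2 x y" "z \<noteq> 0"
  shows "span2 (lam z) z \<in> transversals ell (Mt 0) (Mt 1)"
proof -
  have nz: "z$4 \<noteq> 0 \<or> z$5 \<noteq> 0" using t_nz z by blast
  have z1: "z$1 = 0" using t_1 z by blast
  have ind: "indep (lam z) z"
    unfolding indep_def
  proof (intro allI impI)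
    fix a b :: 'a
    assume h: "vsmult a (lam z) + vsmult b z = 0"
    then have "(vsmult a (lam z) + vsmult b z) $ 4 = 0" "(vsmult a (lam z) + vsmult b z) $ 5 = 0"
      by simp_all
    then have b0: "b = 0" using nz by auto
    from h have "(vsmult a (lam z) + vsmult b z) $ 2 = 0" "(vsmult a (lam z) + vsmult b z) $ 3 = 0"
      by simp_all
    then have "a = 0" using nz b0 by auto
    with b0 show "a = 0 \<and> b = 0" by simp
  qed
  have sl: "solid_line (span2 (lam z) z)"
    unfolding solid_line_def is_pline_def
  proof
    show "\<exists>u v. span2 (lam z) z = span2 u v \<and> (\<forall>a b. vsmult a u + vsmult b v = 0 \<longrightarrow> a = 0 \<and> b = 0)"
      using ind unfolding indep_def by blast
    show "span2 (lam z) z \<subseteq> Sigma_solid"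
      unfolding span2_def Sigma_solid_def using z1 by auto
  qed
  have lz: "lam z \<in> span2 (lam z) z" by (rule span2_memI[of _ 1 _ 0]) (simp add: vec5_eq)
  have lz0: "lam z \<noteq> 0" using nz by (auto simp: vec5_eq)
  have lzell: "lam z \<in> ell" unfolding ell_def by simp
  have m1: "meets (span2 (lam z) z) ell" unfolding meets_def using lz lz0 lzell by blast
  have zm: "z \<in> span2 (lam z) z" by (rule span2_memI[of _ 0 _ 1]) (simp add: vec5_eq)
  have m2: "meets (span2 (lam z) z) (Mt 0)" unfolding meets_def Mt0 using zm z by blast
  have w: "Mb 1 *v z \<in> span2 (lam z) z" by (rule span2_memI[of _ 1 _ 1]) (simp add: vec5_eq)
  have w0: "Mb 1 *v z \<noteq> 0" using nz by (auto simp: vec5_eq)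
  have w1: "Mb 1 *v z \<in> Mt 1" unfolding Mt_def using z(1) by blast
  have m3: "meets (span2 (lam z) z) (Mt 1)" unfolding meets_def using w w0 w1 by blast
  show ?thesis unfolding transversals_def using sl m1 m2 m3 by blast
qed

lemma Mt_meets_trans:
  assumes m: "m \<in> transversals ell (Mt 0) (Mt 1)"
  shows "meets (Mt s) m"
proof -
  from m have sm: "solid_line m" and m1: "meets m ell" and m2: "meets m (Mt 0)" and m3: "meets m (Mt 1)"
    unfolding transversals_def by auto
  obtain u v where muv: "m = span2 u v" and iuv: "indep u v"
    using sm unfolding solid_line_def is_pline_def indep_def by blast
  obtain z1 where z1: "z1 \<noteq> 0" "z1 \<in> m" "z1 \<in> ell" using m1 unfolding meets_def by blast
  obtain z2 where z2: "z2 \<noteq> 0" "z2 \<in> m" "z2 \<in> span2 x y" using m2 unfolding meets_def Mt0 by blast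
  obtain z3 where z3: "z3 \<noteq> 0" "z3 \<in> m" "z3 \<in> Mt 1" using m3 unfolding meets_def by blast
  obtain z' where z': "z' \<in> span2 x y" "z3 = Mb 1 *v z'" using z3(3) unfolding Mt_def by blast
  have nz2: "z2$4 \<noteq> 0 \<or> z2$5 \<noteq> 0" using t_nz z2(3) z2(1) by blast
  have e1: "z1$1 = 0" "z1$4 = 0" "z1$5 = 0" using z1(3) unfolding ell_def by auto
  have nz1: "z1$2 \<noteq> 0 \<or> z1$3 \<noteq> 0" using z1(1) e1 by (auto simp: vec5_eq)
  have i12: "indep z1 z2"
    unfolding indep_def
  proof (intro allI impI)
    fix a b :: 'a
    assume h: "vsmult a z1 + vsmult b z2 = 0"
    then have "(vsmult a z1 + vsmult b z2) $ 4 = 0" "(vsmult a z1 + vsmult b z2) $ 5 = 0"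
      by simp_all
    then have b0: "b = 0" using nz2 e1 by auto
    from h have "(vsmult a z1 + vsmult b z2) $ 2 = 0" "(vsmult a z1 + vsmult b z2) $ 3 = 0"
      by simp_all
    then have "a = 0" using nz1 b0 by auto
    with b0 show "a = 0 \<and> b = 0" by simp
  qed
  have mz: "m = span2 z1 z2" by (rule line_eq[OF muv iuv z1(2) z2(2) i12])
  obtain \<alpha> \<beta> where z3d: "z3 = vsmult \<alpha> z1 + vsmult \<beta> z2" using z3(2) unfolding mz span2_def by blast
  obtain a b where z2d: "z2 = vsmult a x + vsmult b y" using z2(3) unfolding span2_def by blast
  obtain c d where z'd: "z' = vsmult c x + vsmult d y" using z'(1) unfolding span2_def by blast
  have c4: "z3$4 = z'$4" "z3$5 = z'$5" "z3$2 = z'$2 + z'$4" "z3$3 = z'$3 + z'$5"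
    unfolding z'(2) by simp_all
  have d4: "z3$4 = \<beta> * z2$4" "z3$5 = \<beta> * z2$5" "z3$2 = \<alpha> * z1$2 + \<beta> * z2$2"
    "z3$3 = \<alpha> * z1$3 + \<beta> * z2$3"
    unfolding z3d using e1 by simp_all
  have "c * x$4 + d * y$4 = (\<beta>*a) * x$4 + (\<beta>*b) * y$4"
       "c * x$5 + d * y$5 = (\<beta>*a) * x$5 + (\<beta>*b) * y$5"
    using c4 d4 unfolding z'd z2d by (simp_all add: algebra_simps)
  then have cd: "c = \<beta>*a \<and> d = \<beta>*b" using i2' by blast
  have zb: "z'$i = \<beta> * z2$i" for i unfolding z'd z2d using cd by (simp add: algebra_simps)
  have r2: "\<alpha> * z1$2 = \<beta> * z2$4" "\<alpha> * z1$3 = \<beta> * z2$5"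
    using c4 d4 zb[of 2] zb[of 3] zb[of 4] zb[of 5] by (simp_all add: algebra_simps)
  have b0: "\<beta> \<noteq> 0"
  proof
    assume "\<beta> = 0"
    then have "z' = 0" using zb by (simp add: vec5_eq)
    then have "z3 = 0" unfolding z'(2) by (simp add: vec5_eq)
    with z3(1) show False by simp
  qed
  have a0: "\<alpha> \<noteq> 0"
  proof
    assume "\<alpha> = 0"
    then have "z2$4 = 0" "z2$5 = 0" using r2 b0 by simp_all
    with nz2 show False by simp
  qed
  have q2: "z1$2 = \<beta> * z2$4 / \<alpha>" "z1$3 = \<beta> * z2$5 / \<alpha>"
    using r2 a0 by (simp_all add: field_simps)
  have wm: "Mb s *v z2 = vsmult (s * \<alpha> / \<beta>) z1 + vsmult 1 z2"
    unfolding vec5_eq using e1 q2 a0 b0 by (simp add: field_simps)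
  have w1: "Mb s *v z2 \<in> m" unfolding mz wm by (rule span2_mem)
  have w2: "Mb s *v z2 \<in> Mt s" unfolding Mt_def using z2(3) by blast
  have w0: "Mb s *v z2 \<noteq> 0" using nz2 by (auto simp: vec5_eq)
  show ?thesis unfolding meets_def using w1 w2 w0 by blast
qed

lemma P_of:
  assumes "P \<in> span2 (lam z) z"
  obtains a b where "P = vsmult a (lam z) + vsmult b z"
  using assms unfolding span2_def by blast

lemma in_R:
  assumes sL: "solid_line L" and mL: "\<forall>m \<in> transversals ell (Mt 0) (Mt 1). meets L m"
  shows "L = ell \<or> (\<exists>s. L = Mt s)"
proof -
  have ixy: "indep x y" by (rule indep_xy)
  have xt: "x \<in> span2 x y" by (rule span2_memI[of _ 1 _ 0]) (simp add: vec5_eq)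
  have yt: "y \<in> span2 x y" by (rule span2_memI[of _ 0 _ 1]) (simp add: vec5_eq)
  have xyt: "x + y \<in> span2 x y" by (rule span2_memI[of _ 1 _ 1]) (simp add: vec5_eq)
  have x0: "x \<noteq> 0"
  proof
    assume "x = 0" then have "vsmult 1 x + vsmult 0 y = 0" by (simp add: vec5_eq)
    from ixy[unfolded indep_def, rule_format, OF this] show False by simp
  qed
  have y0: "y \<noteq> 0"
  proof
    assume "y = 0" then have "vsmult 0 x + vsmult 1 y = 0" by (simp add: vec5_eq)
    from ixy[unfolded indep_def, rule_format, OF this] show False by simp
  qed
  have xy0: "x + y \<noteq> 0"
  proof
    assume "x + y = 0" then have "vsmult 1 x + vsmult 1 y = 0" by (simp add: vec5_eq)
    from ixy[unfolded indep_def, rule_format, OF this] show False by simp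
  qed
  have "meets L (span2 (lam x) x)" using mL trans_mem[OF xt x0] by blast
  then obtain P1 where P1: "P1 \<noteq> 0" "P1 \<in> L" "P1 \<in> span2 (lam x) x" unfolding meets_def by blast
  have "meets L (span2 (lam y) y)" using mL trans_mem[OF yt y0] by blast
  then obtain P2 where P2: "P2 \<noteq> 0" "P2 \<in> L" "P2 \<in> span2 (lam y) y" unfolding meets_def by blast
  have "meets L (span2 (lam (x+y)) (x+y))" using mL trans_mem[OF xyt xy0] by blast
  then obtain P3 where P3: "P3 \<noteq> 0" "P3 \<in> L" "P3 \<in> span2 (lam (x+y)) (x+y)" unfolding meets_def by blast
  obtain a1 b1 where "P1 = vsmult a1 (lam x) + vsmult b1 x" using P1(3) by (rule P_of)
  then have P1d: "P1 = Ffun x y a1 0 b1 0" unfolding Ffun_def vec5_eq by simp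
  obtain a2 b2 where "P2 = vsmult a2 (lam y) + vsmult b2 y" using P2(3) by (rule P_of)
  then have P2d: "P2 = Ffun x y 0 a2 0 b2" unfolding Ffun_def vec5_eq by simp
  obtain a3 b3 where "P3 = vsmult a3 (lam (x+y)) + vsmult b3 (x+y)" using P3(3) by (rule P_of)
  then have P3d: "P3 = Ffun x y a3 a3 b3 b3" unfolding Ffun_def vec5_eq by (simp add: algebra_simps)
  have comb: "vsmult \<alpha> P1 + vsmult \<beta> P2 = Ffun x y (\<alpha>*a1) (\<beta>*a2) (\<alpha>*b1) (\<beta>*b2)" for \<alpha> \<beta>
    unfolding P1d P2d Ffun_def vec5_eq by (simp add: algebra_simps)
  have nz1: "a1 \<noteq> 0 \<or> b1 \<noteq> 0" using P1(1) Ffun_zero unfolding P1d by auto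
  have nz2: "a2 \<noteq> 0 \<or> b2 \<noteq> 0" using P2(1) Ffun_zero unfolding P2d by auto
  have nz3: "a3 \<noteq> 0 \<or> b3 \<noteq> 0" using P3(1) Ffun_zero unfolding P3d by auto
  have i12: "indep P1 P2"
    unfolding indep_def
  proof (intro allI impI)
    fix \<alpha> \<beta> :: 'a
    assume "vsmult \<alpha> P1 + vsmult \<beta> P2 = 0"
    then have "Ffun x y (\<alpha>*a1) (\<beta>*a2) (\<alpha>*b1) (\<beta>*b2) = Ffun x y 0 0 0 0" unfolding comb Ffun_zero .
    then have "\<alpha>*a1 = 0 \<and> \<beta>*a2 = 0 \<and> \<alpha>*b1 = 0 \<and> \<beta>*b2 = 0" by (rule Ffun_inj)
    then show "\<alpha> = 0 \<and> \<beta> = 0" using nz1 nz2 by auto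
  qed
  obtain u v where Luv: "L = span2 u v" and iuv: "indep u v"
    using sL unfolding solid_line_def is_pline_def indep_def by blast
  have LP: "L = span2 P1 P2" by (rule line_eq[OF Luv iuv P1(2) P2(2) i12])
  obtain \<alpha> \<beta> where "P3 = vsmult \<alpha> P1 + vsmult \<beta> P2" using P3(2) unfolding LP span2_def by blast
  then have "Ffun x y a3 a3 b3 b3 = Ffun x y (\<alpha>*a1) (\<beta>*a2) (\<alpha>*b1) (\<beta>*b2)" unfolding comb P3d .
  then have co: "a3 = \<alpha>*a1" "a3 = \<beta>*a2" "b3 = \<alpha>*b1" "b3 = \<beta>*b2" using Ffun_inj by blast+
  show ?thesis
  proof (cases "b1 = 0")
    case True
    then have "b3 = 0" using co by simp
    then have "a3 \<noteq> 0" using nz3 by simp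
    then have "\<beta> \<noteq> 0" using co by auto
    then have "b2 = 0" using co(4) \<open>b3 = 0\<close> by simp
    have P1e: "P1 \<in> ell" unfolding P1d ell_def Ffun_def using True x1 by simp
    have P2e: "P2 \<in> ell" unfolding P2d ell_def Ffun_def using \<open>b2 = 0\<close> y1 by simp
    have "ell = span2 P1 P2" by (rule line_eq[OF ell_span indep_E P1e P2e i12])
    then show ?thesis using LP by simp
  next
    case False
    have "\<alpha> \<noteq> 0" using co nz3 by auto
    then have "b3 \<noteq> 0" using co False by simp
    then have "\<beta> \<noteq> 0" "b2 \<noteq> 0" using co by auto
    define s where "s = a1 / b1"
    have a1e: "a1 = b1 * s" unfolding s_def using False by simp
    have a2e: "a2 = b2 * s"
    proof -
      have "\<beta> * a2 = \<alpha> * a1" "\<beta> * b2 = \<alpha> * b1" using co by simp_all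
      then have "\<beta> * a2 = \<beta> * (b2 * s)" unfolding a1e by (simp add: algebra_simps)
      then show ?thesis using \<open>\<beta> \<noteq> 0\<close> by simp
    qed
    have P1m: "P1 \<in> Mt s" unfolding Mt_eq
      by (rule span2_memI[of _ b1 _ 0]) (simp add: P1d Ffun_def vec5_eq a1e algebra_simps)
    have P2m: "P2 \<in> Mt s" unfolding Mt_eq
      by (rule span2_memI[of _ 0 _ b2]) (simp add: P2d Ffun_def vec5_eq a2e algebra_simps)
    have "Mt s = span2 P1 P2" by (rule line_eq[OF Mt_eq indep_Mt P1m P2m i12])
    then show ?thesis using LP by blast
  qed
qed

lemma regulus_xy: "is_regulus (G2_orbit (span2 x y) \<union> {ell})"
proof -
  have G: "G2_orbit (span2 x y) = range Mt" unfolding G2_orbit_def Mt_def by auto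
  have eq: "G2_orbit (span2 x y) \<union> {ell} =
     {L. solid_line L \<and> (\<forall>m \<in> transversals ell (Mt 0) (Mt 1). meets L m)}"
  proof (rule set_eqI)
    fix L
    show "L \<in> G2_orbit (span2 x y) \<union> {ell} \<longleftrightarrow>
      L \<in> {L. solid_line L \<and> (\<forall>m \<in> transversals ell (Mt 0) (Mt 1). meets L m)}"
    proof
      assume "L \<in> G2_orbit (span2 x y) \<union> {ell}"
      then have "L = ell \<or> (\<exists>s. L = Mt s)" unfolding G by auto
      then show "L \<in> {L. solid_line L \<and> (\<forall>m \<in> transversals ell (Mt 0) (Mt 1). meets L m)}"
      proof
        assume "L = ell"
        then show ?thesis using ell_solid meets_sym unfolding transversals_def by auto
      next
        assume "\<exists>s. L = Mt s"
        then obtain s where "L = Mt s" by blast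
        then show ?thesis using solid_Mt Mt_meets_trans by auto
      qed
    next
      assume "L \<in> {L. solid_line L \<and> (\<forall>m \<in> transversals ell (Mt 0) (Mt 1). meets L m)}"
      then have "L = ell \<or> (\<exists>s. L = Mt s)" using in_R by blast
      then show "L \<in> G2_orbit (span2 x y) \<union> {ell}" unfolding G by auto
    qed
  qed
  show ?thesis unfolding is_regulus_def
    apply (rule exI[of _ ell], rule exI[of _ "Mt 0"], rule exI[of _ "Mt 1"])
    using ell_solid solid_Mt skew_ell skew_Mt[of 0 1] eq by simp
qed

end

theorem lemma3p2:
  fixes h :: nat and t :: "('a::{field,finite} ^5) set"
  assumes "CARD('a) = 2 ^ h"
    and "t \<in> T_lines"
  shows "is_regulus (G2_orbit t \<union> {ell})"
proof -
  have W: "W_line t" and C: "card {ppoint x | x. x \<in> t \<and> x \<in> Hq \<and> x \<notin> ell} = 1"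
    using assms(2) unfolding T_lines_def by auto
  from W obtain x y where tdef: "t = span2 x y"
    and ixy: "\<forall>a b. vsmult a x + vsmult b y = 0 \<longrightarrow> a = 0 \<and> b = 0"
    and tS: "t \<subseteq> Sigma_solid" and iso: "\<forall>u\<in>t. \<forall>v\<in>t. Bform u v = 0"
    unfolding W_line_def solid_line_def is_pline_def by blast
  have xt: "x \<in> t" unfolding tdef by (rule span2_memI[of _ 1 _ 0]) (simp add: vec5_eq)
  have yt: "y \<in> t" unfolding tdef by (rule span2_memI[of _ 0 _ 1]) (simp add: vec5_eq)
  have x1: "x$1 = 0" using xt tS unfolding Sigma_solid_def by auto
  have y1: "y$1 = 0" using yt tS unfolding Sigma_solid_def by auto
  have skew: "z = 0" if z: "z \<in> t" "z \<in> ell" for z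
  proof (rule ccontr)
    assume zn: "z \<noteq> 0"
    define S where "S = {ppoint x | x. x \<in> t \<and> x \<in> Hq \<and> x \<notin> ell}"
    have CS: "card S = 1" using C unfolding S_def .
    then obtain p where Sp: "S = {p}" using card_1_singletonE by blast
    then have "p \<in> S" by simp
    then obtain w where w: "p = ppoint w" "w \<in> t" "w \<in> Hq" "w \<notin> ell" unfolding S_def by blast
    have w1: "w$1 = 0" using w(3) unfolding Hq_def Sigma_solid_def by auto
    have wq: "w$2 * w$5 + w$3 * w$4 = 0" using w(3) unfolding Hq_def by auto
    have w45: "w$4 \<noteq> 0 \<or> w$5 \<noteq> 0" using w(4) w1 unfolding ell_def by auto
    have zc: "z$1 = 0" "z$4 = 0" "z$5 = 0" using z(2) unfolding ell_def by auto
    obtain a b where za: "z = vsmult a x + vsmult b y" using z(1) unfolding tdef span2_def by blast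
    obtain c d where wa: "w = vsmult c x + vsmult d y" using w(2) unfolding tdef span2_def by blast
    have zwt: "z + w \<in> t" unfolding tdef
      by (rule span2_memI[of _ "a+c" _ "b+d"]) (simp add: za wa vec5_eq algebra_simps)
    have B: "Bform z w = 0" using iso z(1) w(2) by blast
    have zwq: "(z+w)$2 * (z+w)$5 + (z+w)$3 * (z+w)$4 = 0"
      using B wq zc unfolding Bform_def by (simp add: algebra_simps)
    have zw0: "z + w \<noteq> 0" using w45 zc by (auto simp: vec5_eq)
    have zwH: "z + w \<in> Hq" unfolding Hq_def Sigma_solid_def using zwq zw0 w1 zc by simp
    have zwl: "z + w \<notin> ell" unfolding ell_def using w45 zc by auto
    have "ppoint (z + w) \<in> S" unfolding S_def using zwt zwH zwl by blast
    then have "ppoint (z + w) = ppoint w" using Sp w(1) by simp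
    moreover have "z + w \<in> ppoint (z + w)" unfolding ppoint_def
      by (rule CollectI, rule exI[of _ 1]) (simp add: vec5_eq)
    ultimately have "z + w \<in> ppoint w" by simp
    then obtain k where k: "z + w = vsmult k w" unfolding ppoint_def by blast
    have "w$4 = k * w$4" "w$5 = k * w$5" using k zc by (simp_all add: vec5_eq)
    then have "k = 1" using w45 by auto
    then have "z = 0" using k by (simp add: vec5_eq)
    with zn show False by simp
  qed
  have i2: "c = 0 \<and> d = 0" if "c * x$4 + d * y$4 = 0" "c * x$5 + d * y$5 = 0" for c d
  proof -
    have "vsmult c x + vsmult d y \<in> t" unfolding tdef by (rule span2_mem)
    moreover have "vsmult c x + vsmult d y \<in> ell" unfolding ell_def using that x1 y1 by simp
    ultimately have "vsmult c x + vsmult d y = 0" using skew by blast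
    then show ?thesis using ixy by blast
  qed
  show ?thesis unfolding tdef by (rule regulus_xy[OF x1 y1 i2])
qed

end
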